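(* Let $G$ be a finite group, $m$ a positive integer and $n$ a positive odd integer. Then $P_e(G)\cong P_e\big((\prod_{i=1}^{m}\mathbb{Z}_2)\times\mathbb{Z}_n\big)$ if and only if $G\cong (\prod_{i=1}^{m}\mathbb{Z}_2)\times\mathbb{Z}_n$.
   Context: All groups are finite. $\mathbb{Z}_k$ denotes the cyclic group of order $k$, and $\prod_{i=1}^m\mathbb{Z}_2$ the direct product of $m$ copies of $\mathbb{Z}_2$. For a group $X$, the enhanced power graph $P_e(X)$ is the simple graph with vertex set $X$ in which two distinct vertices $x,y$ are adjacent if and only if $\langle x,y\rangle$ is cyclic. *)

theory Defs
  imports "HOL-Algebra.Algebra"
begin

definition ep_adj :: "('a, 'b) monoid_scheme \<Rightarrow> 'a \<Rightarrow> 'a \<Rightarrow> bool" where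
  "ep_adj G x y \<longleftrightarrow> x \<noteq> y \<and> cyclic_group (subgroup_generated G {x, y})"

definition ep_graph_iso :: "('a, 'b) monoid_scheme \<Rightarrow> ('c, 'd) monoid_scheme \<Rightarrow> bool" where
  "ep_graph_iso G H \<longleftrightarrow> (\<exists>f. bij_betw f (carrier G) (carrier H) \<and>
     (\<forall>x\<in>carrier G. \<forall>y\<in>carrier G. ep_adj G x y \<longleftrightarrow> ep_adj H (f x) (f y)))"

definition Z2m_Zn :: "nat \<Rightarrow> nat \<Rightarrow> ((nat \<Rightarrow> int) \<times> int) monoid" where
  "Z2m_Zn m n = product_group {..<m} (\<lambda>_. integer_mod_group 2) \<times>\<times> integer_mod_group n"

end

theory Submission
  imports Defs
begin


definition cyc :: "('a,'b) monoid_scheme \<Rightarrow> 'a \<Rightarrow> 'a set" where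
  "cyc G w = range (\<lambda>k::int. w [^]\<^bsub>G\<^esub> k)"

definition cadj :: "('a,'b) monoid_scheme \<Rightarrow> 'a \<Rightarrow> 'a \<Rightarrow> bool" where
  "cadj G x y \<longleftrightarrow> (\<exists>w\<in>carrier G. x \<in> cyc G w \<and> y \<in> cyc G w)"

lemma exists_max_nat:
  assumes "finite A" "A \<noteq> {}"
  shows "\<exists>g\<in>A. \<forall>a\<in>A. (f a::nat) \<le> f g"
proof -
  have "Max (f ` A) \<in> f ` A" using assms by (intro Max_in) auto
  then obtain g where "g \<in> A" "f g = Max (f ` A)" by auto
  then show ?thesis using assms by (metis Max_ge finite_imageI imageI)
qed

context group begin

lemma cyc_subgroup: "w \<in> carrier G \<Longrightarrow> subgroup (cyc G w) G"
  unfolding cyc_def by (rule subgroup_of_powers)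

lemma cyc_self: "w \<in> carrier G \<Longrightarrow> w \<in> cyc G w"
  unfolding cyc_def by (metis int_pow_1 rangeI)

lemma cyc_carrier: "w \<in> carrier G \<Longrightarrow> cyc G w \<subseteq> carrier G"
  unfolding cyc_def by auto

lemma cyc_mono: "w \<in> carrier G \<Longrightarrow> g \<in> cyc G w \<Longrightarrow> cyc G g \<subseteq> cyc G w"
  unfolding cyc_def by (auto simp: int_pow_pow)

lemma cyc_one: "cyc G \<one> = {\<one>}"
  unfolding cyc_def by auto

lemma cadj_refl: "x \<in> carrier G \<Longrightarrow> cadj G x x"
  unfolding cadj_def using cyc_self by blast

lemma cadj_sym: "cadj G x y \<Longrightarrow> cadj G y x"
  unfolding cadj_def by blast

lemma cadj_comm: "cadj G x y \<Longrightarrow> x \<otimes> y = y \<otimes> x"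
  unfolding cadj_def cyc_def
  by (auto simp flip: int_pow_mult simp: add.commute)

lemma cadj_carrier: "cadj G x y \<Longrightarrow> x \<in> carrier G \<and> y \<in> carrier G"
  unfolding cadj_def using cyc_carrier by blast

lemma subgroup_of_cyc:
  assumes T: "subgroup T G" and w: "w \<in> carrier G" and Tw: "T \<subseteq> cyc G w"
  shows "\<exists>g\<in>T. T = cyc G g"
proof (cases "T \<subseteq> {\<one>}")
  case True
  then have "T = {\<one>}" using subgroup.one_closed[OF T] by auto
  then show ?thesis using subgroup.one_closed[OF T] cyc_one by auto
next
  case False
  then obtain t where t: "t \<in> T" "t \<noteq> \<one>" by auto
  then obtain k :: int where k: "t = w [^] k" using Tw unfolding cyc_def by auto
  have "k \<noteq> 0" using t k by auto
  have wk: "w [^] (nat \<bar>k\<bar>) \<in> T"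
  proof (cases "k \<ge> 0")
    case True
    then have "w [^] (nat \<bar>k\<bar>) = w [^] k"
      by (metis abs_of_nonneg int_nat_eq int_pow_int)
    then show ?thesis using t k by simp
  next
    case False
    then have "w [^] (nat \<bar>k\<bar>) = w [^] (- k)"
      by (metis abs_of_neg int_nat_eq int_pow_int leI nat_0_le abs_ge_zero)
    also have "\<dots> = inv t" using k w by (simp add: int_pow_neg)
    finally show ?thesis using t subgroup.m_inv_closed[OF T] by simp
  qed
  define A where "A = {d::nat. 0 < d \<and> w [^] d \<in> T}"
  have kA: "nat \<bar>k\<bar> \<in> A" using wk \<open>k \<noteq> 0\<close> unfolding A_def by auto
  define d where "d = (LEAST d. d \<in> A)"
  have dA: "d \<in> A" unfolding d_def using kA by (rule LeastI)
  have dmin: "\<And>e. e \<in> A \<Longrightarrow> d \<le> e" unfolding d_def by (rule Least_le)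
  have d0: "0 < d" and gT: "w [^] d \<in> T" using dA unfolding A_def by auto
  have gint: "w [^] d = w [^] (int d)" by (simp add: int_pow_int)
  show ?thesis
  proof (intro bexI[of _ "w [^] d"] equalityI)
    show "cyc G (w [^] d) \<subseteq> T"
      unfolding cyc_def using gT by (auto intro: subgroup_int_pow_closed[OF T])
    show "T \<subseteq> cyc G (w [^] d)"
    proof
      fix s assume s: "s \<in> T"
      then obtain j :: int where j: "s = w [^] j" using Tw unfolding cyc_def by auto
      define q where "q = j div int d"
      define r where "r = j mod int d"
      have jqr: "j = int d * q + r" unfolding q_def r_def by simp
      have r0: "0 \<le> r" "r < int d" unfolding r_def using d0 by auto
      have "s = (w [^] (int d * q)) \<otimes> w [^] r" using j jqr w by (simp add: int_pow_mult)
      also have "w [^] (int d * q) = (w [^] d) [^] q" using w by (simp add: gint int_pow_pow)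
      finally have s2: "s = (w [^] d) [^] q \<otimes> w [^] r" .
      have gq: "(w [^] d) [^] q \<in> T" using gT by (rule subgroup_int_pow_closed[OF T])
      have "w [^] r = inv ((w [^] d) [^] q) \<otimes> s" using s2 w
        by (simp add: m_assoc[symmetric])
      then have wr: "w [^] r \<in> T" using gq s T by (simp add: subgroup.m_closed subgroup.m_inv_closed)
      have "r = 0"
      proof (rule ccontr)
        assume "r \<noteq> 0"
        then have "nat r \<in> A" using wr r0 unfolding A_def by (simp add: int_pow_int[symmetric])
        then have "d \<le> nat r" by (rule dmin)
        then show False using r0 by simp
      qed
      then show "s \<in> cyc G (w [^] d)" using s2 w unfolding cyc_def by auto
    qed
  qed (use gT in auto)
qed

lemma cyclic_pair_iff:
  assumes x: "x \<in> carrier G" and y: "y \<in> carrier G"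
  shows "cyclic_group (subgroup_generated G {x,y}) \<longleftrightarrow> cadj G x y"
proof -
  let ?S = "subgroup_generated G {x,y}"
  have cS: "carrier ?S = generate G {x,y}" using x y
    by (simp add: carrier_subgroup_generated Int_absorb1)
  have xyS: "x \<in> carrier ?S" "y \<in> carrier ?S" unfolding cS by (auto intro: generate.incl)
  have sub: "subgroup (carrier ?S) G" by (rule subgroup_subgroup_generated)
  have gS: "group ?S" by simp
  have eq: "range (\<lambda>k::int. g [^]\<^bsub>?S\<^esub> k) = cyc G g" if "g \<in> carrier ?S" for g
    using int_pow_subgroup_generated[OF that] unfolding cyc_def by simp
  have "cyclic_group ?S \<longleftrightarrow> (\<exists>g\<in>carrier ?S. carrier ?S = cyc G g)"
    using group.cyclic_group[OF gS] eq by auto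
  also have "\<dots> \<longleftrightarrow> cadj G x y"
  proof
    assume "\<exists>g\<in>carrier ?S. carrier ?S = cyc G g"
    then obtain g where "g \<in> carrier ?S" "carrier ?S = cyc G g" by auto
    then show "cadj G x y" unfolding cadj_def using xyS subgroup.mem_carrier[OF sub] by auto
  next
    assume "cadj G x y"
    then obtain w where w: "w \<in> carrier G" "x \<in> cyc G w" "y \<in> cyc G w" unfolding cadj_def by auto
    have "carrier ?S \<subseteq> cyc G w"
      by (rule subgroup_generated_minimal[OF cyc_subgroup[OF w(1)]]) (use w in auto)
    then show "\<exists>g\<in>carrier ?S. carrier ?S = cyc G g"
      using subgroup_of_cyc[OF sub w(1)] by blast
  qed
  finally show ?thesis .
qed

lemma ep_adj_iff:
  "x \<in> carrier G \<Longrightarrow> y \<in> carrier G \<Longrightarrow> ep_adj G x y \<longleftrightarrow> x \<noteq> y \<and> cadj G x y"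
  unfolding ep_adj_def using cyclic_pair_iff by auto

lemma cyc_max_eq:
  assumes "finite (carrier G)" "c \<in> carrier G" "g \<in> cyc G c" "card (cyc G c) \<le> card (cyc G g)"
  shows "cyc G g = cyc G c"
  using assms cyc_mono cyc_carrier by (meson card_seteq finite_subset)

lemma all_cadj_cyclic:
  assumes fin: "finite (carrier G)"
    and all: "\<And>a b. a \<in> carrier G \<Longrightarrow> b \<in> carrier G \<Longrightarrow> cadj G a b"
  shows "\<exists>g\<in>carrier G. carrier G = cyc G g"
proof -
  obtain g where g: "g \<in> carrier G" and gmax: "\<And>a. a \<in> carrier G \<Longrightarrow> card (cyc G a) \<le> card (cyc G g)"
    using exists_max_nat[OF fin, of "\<lambda>a. card (cyc G a)"] by auto
  have "carrier G \<subseteq> cyc G g"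
  proof
    fix a assume a: "a \<in> carrier G"
    obtain c where c: "c \<in> carrier G" "g \<in> cyc G c" "a \<in> cyc G c"
      using all[OF g a] unfolding cadj_def by auto
    have "cyc G g = cyc G c" using cyc_max_eq[OF fin c(1,2) gmax[OF c(1)]] .
    then show "a \<in> cyc G g" using c by simp
  qed
  then show ?thesis using g cyc_carrier[OF g] by auto
qed

end

lemma iso_ep_graph_iso:
  assumes G: "group G" and H: "group H" and h: "h \<in> iso G H"
  shows "ep_graph_iso G H"
  unfolding ep_graph_iso_def
proof (intro exI conjI ballI)
  show bij: "bij_betw h (carrier G) (carrier H)" using h by (simp add: iso_def)
  interpret group_hom G H h using G H h by (simp add: group_hom_def group_hom_axioms_def iso_def)
  fix x y assume x: "x \<in> carrier G" and y: "y \<in> carrier G"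
  have "h \<in> iso (subgroup_generated G {x,y}) (subgroup_generated H {h x, h y})"
    by (rule iso_between_subgroups) (use h x y in auto)
  then have "cyclic_group (subgroup_generated G {x,y}) \<longleftrightarrow> cyclic_group (subgroup_generated H {h x, h y})"
    by (intro isomorphic_group_cyclicity is_isoI) (simp_all add: G H group.group_subgroup_generated)
  moreover have "x \<noteq> y \<longleftrightarrow> h x \<noteq> h y" using bij x y by (auto simp: bij_betw_def inj_on_def)
  ultimately show "ep_adj G x y \<longleftrightarrow> ep_adj H (h x) (h y)" unfolding ep_adj_def by simp
qed

lemma cyclic_iso_Zn:
  assumes C: "group C" and fin: "finite (carrier C)" and g: "g \<in> carrier C"
    and gen: "carrier C = cyc C g" and n: "card (carrier C) = n"
  shows "integer_mod_group n \<cong> C"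
proof -
  interpret C: group C by (rule C)
  have n0: "n \<noteq> 0" using n fin g card_0_eq by blast
  have "g [^]\<^bsub>C\<^esub> n = \<one>\<^bsub>C\<^esub>" using C.pow_order_eq_1[OF g] n by (simp add: order_def)
  then have gn: "g [^]\<^bsub>C\<^esub> (int n) = \<one>\<^bsub>C\<^esub>" by (simp add: int_pow_int)
  have gmod: "g [^]\<^bsub>C\<^esub> (k mod int n) = g [^]\<^bsub>C\<^esub> k" for k
  proof -
    have e1: "g [^]\<^bsub>C\<^esub> k = g [^]\<^bsub>C\<^esub> (int n * (k div int n) + k mod int n)" by simp
    have e2: "g [^]\<^bsub>C\<^esub> (int n * (k div int n) + k mod int n) = g [^]\<^bsub>C\<^esub> (int n * (k div int n)) \<otimes>\<^bsub>C\<^esub> g [^]\<^bsub>C\<^esub> (k mod int n)"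
      by (rule C.int_pow_mult[OF g])
    have e3: "g [^]\<^bsub>C\<^esub> (int n * (k div int n)) = (g [^]\<^bsub>C\<^esub> (int n)) [^]\<^bsub>C\<^esub> (k div int n)"
      by (rule C.int_pow_pow[OF g, symmetric])
    show ?thesis using e1 e2 e3 gn g by simp
  qed
  define \<phi> where "\<phi> k = g [^]\<^bsub>C\<^esub> (k::int)" for k
  have cZ: "carrier (integer_mod_group n) = {0..<int n}" using n0 by (simp add: carrier_integer_mod_group)
  have hom: "\<phi> \<in> hom (integer_mod_group n) C"
    by (rule homI) (use g in \<open>auto simp: \<phi>_def gmod C.int_pow_mult\<close>)
  have img: "\<phi> ` {0..<int n} = carrier C"
  proof
    show "\<phi> ` {0..<int n} \<subseteq> carrier C" using g by (auto simp: \<phi>_def)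
    show "carrier C \<subseteq> \<phi> ` {0..<int n}"
    proof
      fix x assume "x \<in> carrier C"
      then obtain k :: int where "x = g [^]\<^bsub>C\<^esub> k" using gen unfolding cyc_def by auto
      then have "x = \<phi> (k mod int n)" by (simp add: \<phi>_def gmod)
      moreover have "k mod int n \<in> {0..<int n}" using n0 by simp
      ultimately show "x \<in> \<phi> ` {0..<int n}" by blast
    qed
  qed
  have "inj_on \<phi> {0..<int n}"
    by (rule eq_card_imp_inj_on) (use img n in auto)
  then have "\<phi> \<in> iso (integer_mod_group n) C"
    using hom img by (simp add: iso_def bij_betw_def cZ)
  then show ?thesis by (rule is_isoI)
qed



definition elem2 :: "('a,'b) monoid_scheme \<Rightarrow> bool" where
  "elem2 G \<longleftrightarrow> group G \<and> finite (carrier G) \<and> (\<forall>x\<in>carrier G. x \<otimes>\<^bsub>G\<^esub> x = \<one>\<^bsub>G\<^esub>)"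

lemma (in group) elem2_inv:
  assumes "\<forall>x\<in>carrier G. x \<otimes> x = \<one>" "x \<in> carrier G"
  shows "inv x = x"
  using assms inv_equality by blast

lemma (in group) elem2_comm:
  assumes "elem2 G" shows "comm_group G"
proof -
  have sq: "\<forall>x\<in>carrier G. x \<otimes> x = \<one>" using assms by (simp add: elem2_def)
  show ?thesis
  proof (rule group_comm_groupI)
    fix x y assume x: "x \<in> carrier G" and y: "y \<in> carrier G"
    have "x \<otimes> y = inv (x \<otimes> y)" using elem2_inv[OF sq] x y by simp
    also have "\<dots> = inv y \<otimes> inv x" using x y by (simp add: inv_mult_group)
    also have "\<dots> = y \<otimes> x" using elem2_inv[OF sq] x y by simp
    finally show "x \<otimes> y = y \<otimes> x" .
  qed
qed

lemma (in group) elem2_complement: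
  assumes e: "elem2 G" and t: "t \<in> carrier G" "t \<noteq> \<one>"
  shows "\<exists>K. subgroup K G \<and> t \<notin> K \<and> carrier G = K \<union> (\<lambda>k. t \<otimes> k) ` K"
proof -
  interpret comm_group G using elem2_comm[OF e] .
  have fin: "finite (carrier G)" and sq: "\<And>x. x \<in> carrier G \<Longrightarrow> x \<otimes> x = \<one>"
    using e by (auto simp: elem2_def)
  have iv: "\<And>x. x \<in> carrier G \<Longrightarrow> inv x = x" using elem2_inv sq by blast
  define KK where "KK = {K. subgroup K G \<and> t \<notin> K}"
  have "{\<one>} \<in> KK" unfolding KK_def using triv_subgroup t by auto
  moreover have "KK \<subseteq> Pow (carrier G)" unfolding KK_def using subgroup.subset by auto
  moreover have "finite KK" using calculation(2) fin by (meson finite_Pow_iff rev_finite_subset)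
  ultimately obtain K where K: "K \<in> KK" and Kmax: "\<And>K'. K' \<in> KK \<Longrightarrow> card K' \<le> card K"
    using exists_max_nat[of KK card] by blast
  have Ks: "subgroup K G" "t \<notin> K" using K unfolding KK_def by auto
  have KG: "K \<subseteq> carrier G" using Ks subgroup.subset by auto
  have "carrier G \<subseteq> K \<union> (\<lambda>k. t \<otimes> k) ` K"
  proof
    fix s assume s: "s \<in> carrier G"
    show "s \<in> K \<union> (\<lambda>k. t \<otimes> k) ` K"
    proof (rule ccontr)
      assume ns: "s \<notin> K \<union> (\<lambda>k. t \<otimes> k) ` K"
      define K' where "K' = K \<union> (\<lambda>k. s \<otimes> k) ` K"
      have K'G: "K' \<subseteq> carrier G" unfolding K'_def using KG s by auto
      have mem: "\<And>a. a \<in> K' \<longleftrightarrow> a \<in> K \<or> (\<exists>k\<in>K. a = s \<otimes> k)" unfolding K'_def by auto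
      have sub': "subgroup K' G"
      proof (rule subgroupI)
        show "K' \<subseteq> carrier G" by (rule K'G)
        show "K' \<noteq> {}" unfolding K'_def using subgroup.one_closed[OF Ks(1)] by auto
        show "inv a \<in> K'" if "a \<in> K'" for a
        proof -
          have "a \<in> carrier G" using that K'G by blast
          then have "inv a = a" by (rule iv)
          then show ?thesis using that by simp
        qed
        show "a \<otimes> b \<in> K'" if a: "a \<in> K'" and b: "b \<in> K'" for a b
        proof -
          have aG: "a \<in> carrier G" and bG: "b \<in> carrier G" using a b K'G by auto
          consider "a \<in> K" "b \<in> K" | k where "a \<in> K" "k \<in> K" "b = s \<otimes> k"
            | k where "b \<in> K" "k \<in> K" "a = s \<otimes> k" | k l where "k \<in> K" "l \<in> K" "a = s \<otimes> k" "b = s \<otimes> l"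
            using a b mem by blast
          then show ?thesis
          proof cases
            case 1 then show ?thesis using Ks(1) mem by (simp add: subgroup.m_closed)
          next
            case (2 k)
            then have "a \<otimes> b = s \<otimes> (a \<otimes> k)" using s KG aG by (auto simp: m_lcomm)
            moreover have "a \<otimes> k \<in> K" using 2 Ks(1) by (simp add: subgroup.m_closed)
            ultimately show ?thesis using mem by blast
          next
            case (3 k)
            then have "a \<otimes> b = s \<otimes> (k \<otimes> b)" using s KG bG by (auto simp: m_assoc)
            moreover have "k \<otimes> b \<in> K" using 3 Ks(1) by (simp add: subgroup.m_closed)
            ultimately show ?thesis using mem by blast
          next
            case (4 k l)
            moreover have "k \<in> carrier G" "l \<in> carrier G" using 4 KG by auto
            ultimately have "a \<otimes> b = (s \<otimes> s) \<otimes> (k \<otimes> l)" using s by (simp add: m_ac)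
            also have "\<dots> = k \<otimes> l" using sq[OF s] \<open>k \<in> carrier G\<close> \<open>l \<in> carrier G\<close> by simp
            finally show ?thesis using 4 Ks(1) mem by (simp add: subgroup.m_closed)
          qed
        qed
      qed
      have tK': "t \<notin> K'"
      proof
        assume "t \<in> K'"
        then obtain k where k: "k \<in> K" "t = s \<otimes> k" using Ks(2) mem by blast
        have kG: "k \<in> carrier G" using k KG by auto
        have "t \<otimes> k = s \<otimes> (k \<otimes> k)" using s kG k(2) by (simp add: m_assoc)
        also have "\<dots> = s" using sq kG s by simp
        finally have "s = t \<otimes> k" by simp
        then show False using ns k by blast
      qed
      have "K \<subset> K'" using ns subgroup.one_closed[OF Ks(1)] s unfolding K'_def
        by (auto intro!: image_eqI[of s _ \<one>])
      then have "card K < card K'" using K'G fin by (meson psubset_card_mono rev_finite_subset)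
      moreover have "card K' \<le> card K" using Kmax sub' tK' unfolding KK_def by auto
      ultimately show False by simp
    qed
  qed
  moreover have "K \<union> (\<lambda>k. t \<otimes> k) ` K \<subseteq> carrier G" using KG t by auto
  ultimately show ?thesis using Ks by blast
qed

lemma two_elem_iso:
  assumes A: "group A" and B: "group B"
    and cA: "carrier A = {\<one>\<^bsub>A\<^esub>, a}" and cB: "carrier B = {\<one>\<^bsub>B\<^esub>, b}"
    and a: "a \<noteq> \<one>\<^bsub>A\<^esub>" "a \<otimes>\<^bsub>A\<^esub> a = \<one>\<^bsub>A\<^esub>" and b: "b \<noteq> \<one>\<^bsub>B\<^esub>" "b \<otimes>\<^bsub>B\<^esub> b = \<one>\<^bsub>B\<^esub>"
  shows "A \<cong> B"
proof -
  interpret A: group A by (rule A)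
  interpret B: group B by (rule B)
  define f where "f x = (if x = \<one>\<^bsub>A\<^esub> then \<one>\<^bsub>B\<^esub> else b)" for x
  have aA: "a \<in> carrier A" and bB: "b \<in> carrier B" using cA cB by auto
  have hom: "f \<in> hom A B"
  proof (rule homI)
    show "f x \<in> carrier B" if "x \<in> carrier A" for x using bB by (simp add: f_def)
    fix x y assume "x \<in> carrier A" "y \<in> carrier A"
    then show "f (x \<otimes>\<^bsub>A\<^esub> y) = f x \<otimes>\<^bsub>B\<^esub> f y"
      using cA a b aA bB by (auto simp: f_def)
  qed
  have "bij_betw f (carrier A) (carrier B)"
    unfolding bij_betw_def inj_on_def using cA cB a b by (auto simp: f_def)
  then show ?thesis using hom by (intro is_isoI isoI)
qed

lemma trivial_iso:
  assumes A: "group A" and B: "group B"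
    and cA: "carrier A = {\<one>\<^bsub>A\<^esub>}" and cB: "carrier B = {\<one>\<^bsub>B\<^esub>}"
  shows "A \<cong> B"
proof -
  interpret A: group A by (rule A)
  interpret B: group B by (rule B)
  have hom: "(\<lambda>_. \<one>\<^bsub>B\<^esub>) \<in> hom A B" by (rule homI) auto
  have "bij_betw (\<lambda>_. \<one>\<^bsub>B\<^esub>) (carrier A) (carrier B)"
    unfolding bij_betw_def inj_on_def using cA cB by auto
  then show ?thesis using hom by (intro is_isoI isoI)
qed

lemma (in group) elem2_split:
  assumes e: "elem2 G" and t: "t \<in> carrier G" "t \<noteq> \<one>\<^bsub>G\<^esub>"
  shows "\<exists>K. subgroup K G \<and> card (carrier G) = 2 * card K \<and>
           elem2 (subgroup_generated G K) \<and>
           subgroup_generated G K \<times>\<times> subgroup_generated G {\<one>\<^bsub>G\<^esub>, t} \<cong> G \<and>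
           group (subgroup_generated G {\<one>\<^bsub>G\<^esub>, t}) \<and>
           carrier (subgroup_generated G {\<one>\<^bsub>G\<^esub>, t}) = {\<one>\<^bsub>G\<^esub>, t}"
proof -
  interpret comm_group G using elem2_comm[OF e] .
  have fin: "finite (carrier G)" and sq: "\<And>x. x \<in> carrier G \<Longrightarrow> x \<otimes> x = \<one>"
    using e by (auto simp: elem2_def)
  obtain K where K: "subgroup K G" "t \<notin> K" and cG: "carrier G = K \<union> (\<lambda>k. t \<otimes> k) ` K"
    using elem2_complement[OF e t] by blast
  have KG: "K \<subseteq> carrier G" using K subgroup.subset by auto
  have T: "subgroup {\<one>, t} G"
    by (rule subgroupI) (use t sq in \<open>auto simp: elem2_inv\<close>)
  have cT: "carrier (subgroup_generated G {\<one>, t}) = {\<one>, t}"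
    using subgroup.carrier_subgroup_generated_subgroup[OF T] .
  have disj: "K \<inter> (\<lambda>k. t \<otimes> k) ` K = {}"
  proof -
    have False if "k \<in> K" "t \<otimes> k \<in> K" for k
    proof -
      have "k \<in> carrier G" using that KG by auto
      then have "t = (t \<otimes> k) \<otimes> inv k" using t by (simp add: m_assoc)
      then show False using that K by (metis subgroup.m_closed subgroup.m_inv_closed)
    qed
    then show ?thesis by auto
  qed
  have "inj_on (\<lambda>k. t \<otimes> k) K"
  proof (rule inj_onI)
    fix x y assume "x \<in> K" "y \<in> K" "t \<otimes> x = t \<otimes> y"
    then show "x = y" using KG t l_cancel by blast
  qed
  then have ci: "card ((\<lambda>k. t \<otimes> k) ` K) = card K" by (rule card_image)
  have finK: "finite K" using fin KG by (rule rev_finite_subset)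
  have "card (carrier G) = card K + card ((\<lambda>k. t \<otimes> k) ` K)"
    unfolding cG by (rule card_Un_disjoint) (use finK disj in auto)
  then have card: "card (carrier G) = 2 * card K" using ci by simp
  have eK: "elem2 (subgroup_generated G K)"
    unfolding elem2_def using subgroup.carrier_subgroup_generated_subgroup[OF K(1)] KG fin sq
    by (auto intro: rev_finite_subset)
  interpret gds: group_disjoint_sum G K "{\<one>, t}"
    by (simp add: group_disjoint_sum_def K(1) T is_group)
  have "K \<inter> {\<one>, t} \<subseteq> {\<one>}" using K by auto
  moreover have "K <#> {\<one>, t} = carrier G"
  proof -
    have "K <#> {\<one>, t} = K \<union> (\<lambda>k. k \<otimes> t) ` K"
      unfolding set_mult_def using KG by auto
    also have "(\<lambda>k. k \<otimes> t) ` K = (\<lambda>k. t \<otimes> k) ` K" using KG t by (auto simp: m_comm)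
    finally show ?thesis using cG by simp
  qed
  ultimately have "(\<lambda>(x,y). x \<otimes> y) \<in> iso (subgroup_generated G K \<times>\<times> subgroup_generated G {\<one>, t}) G"
    using gds.iso_group_mul comm_group_axioms by blast
  then show ?thesis using K card eK cT by (auto intro: is_isoI)
qed

lemma elem2_iso_aux:
  "\<forall>(G::('a,'b) monoid_scheme) (H::('c,'d) monoid_scheme). card (carrier G) = N \<longrightarrow> elem2 G \<longrightarrow> elem2 H \<longrightarrow>
       card (carrier H) = N \<longrightarrow> G \<cong> H"
proof (induction N rule: less_induct)
  case (less N)
  show ?case
  proof (intro allI impI)
    fix G :: "('a,'b) monoid_scheme" and H :: "('c,'d) monoid_scheme"
    assume cG: "card (carrier G) = N" and eG: "elem2 G" and eH: "elem2 H" and cH: "card (carrier H) = N"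
    interpret G: group G using eG by (simp add: elem2_def)
    interpret H: group H using eH by (simp add: elem2_def)
    have finG: "finite (carrier G)" and finH: "finite (carrier H)" using eG eH by (auto simp: elem2_def)
    show "G \<cong> H"
    proof (cases "carrier G = {\<one>\<^bsub>G\<^esub>}")
      case True
      then have "N = 1" using cG by simp
      then have "carrier H = {\<one>\<^bsub>H\<^esub>}" using cH finH H.one_closed by (metis card_1_singletonE singletonD)
      then show ?thesis using True trivial_iso G.is_group H.is_group by blast
    next
      case False
      then obtain t where t: "t \<in> carrier G" "t \<noteq> \<one>\<^bsub>G\<^esub>" using G.one_closed by blast
      have "card {\<one>\<^bsub>G\<^esub>, t} \<le> N" using cG finG t by (metis G.one_closed card_mono empty_subsetI insert_subset)
      then have N2: "2 \<le> N" using t by simp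
      have "\<not> carrier H \<subseteq> {\<one>\<^bsub>H\<^esub>}"
      proof
        assume "carrier H \<subseteq> {\<one>\<^bsub>H\<^esub>}"
        then have "card (carrier H) \<le> card {\<one>\<^bsub>H\<^esub>}" by (intro card_mono) auto
        then have "card (carrier H) \<le> 1" by simp
        then show False using cH N2 by simp
      qed
      then obtain u where u: "u \<in> carrier H" "u \<noteq> \<one>\<^bsub>H\<^esub>" by blast
      obtain K where K: "subgroup K G" "card (carrier G) = 2 * card K" "elem2 (subgroup_generated G K)"
        "subgroup_generated G K \<times>\<times> subgroup_generated G {\<one>\<^bsub>G\<^esub>, t} \<cong> G"
        "group (subgroup_generated G {\<one>\<^bsub>G\<^esub>, t})" "carrier (subgroup_generated G {\<one>\<^bsub>G\<^esub>, t}) = {\<one>\<^bsub>G\<^esub>, t}"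
        using G.elem2_split[OF eG t] by blast
      obtain L where L: "subgroup L H" "card (carrier H) = 2 * card L" "elem2 (subgroup_generated H L)"
        "subgroup_generated H L \<times>\<times> subgroup_generated H {\<one>\<^bsub>H\<^esub>, u} \<cong> H"
        "group (subgroup_generated H {\<one>\<^bsub>H\<^esub>, u})" "carrier (subgroup_generated H {\<one>\<^bsub>H\<^esub>, u}) = {\<one>\<^bsub>H\<^esub>, u}"
        using H.elem2_split[OF eH u] by blast
      have cK: "carrier (subgroup_generated G K) = K" using K(1) by (rule subgroup.carrier_subgroup_generated_subgroup)
      have cL: "carrier (subgroup_generated H L) = L" using L(1) by (rule subgroup.carrier_subgroup_generated_subgroup)
      have lt: "card K < N" using K(2) cG N2 by simp
      have IH: "\<forall>(G'::('a,'b) monoid_scheme) (H'::('c,'d) monoid_scheme). card (carrier G') = card K \<longrightarrow> elem2 G' \<longrightarrow> elem2 H' \<longrightarrow>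
       card (carrier H') = card K \<longrightarrow> G' \<cong> H'" using less.IH[OF lt] by blast
      have KLc: "card L = card K" using K(2) L(2) cG cH by simp
      have KL: "subgroup_generated G K \<cong> subgroup_generated H L"
        by (rule IH[rule_format]) (use K(3) L(3) cK cL KLc in auto)
      have sq: "t \<otimes>\<^bsub>G\<^esub> t = \<one>\<^bsub>G\<^esub>" "u \<otimes>\<^bsub>H\<^esub> u = \<one>\<^bsub>H\<^esub>" using eG eH t u by (auto simp: elem2_def)
      have TU: "subgroup_generated G {\<one>\<^bsub>G\<^esub>, t} \<cong> subgroup_generated H {\<one>\<^bsub>H\<^esub>, u}"
        by (rule two_elem_iso[OF K(5) L(5)]) (use K(6) L(6) t u sq in auto)
      have gK: "group (subgroup_generated G K)" by simp
      have "subgroup_generated G K \<times>\<times> subgroup_generated G {\<one>\<^bsub>G\<^esub>, t} \<cong>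
            subgroup_generated H L \<times>\<times> subgroup_generated H {\<one>\<^bsub>H\<^esub>, u}"
        using group.DirProd_iso_trans[OF gK KL TU] .
      moreover have "group (subgroup_generated G K \<times>\<times> subgroup_generated G {\<one>\<^bsub>G\<^esub>, t})"
        using gK K(5) by (rule DirProd_group)
      ultimately have "G \<cong> subgroup_generated H L \<times>\<times> subgroup_generated H {\<one>\<^bsub>H\<^esub>, u}"
        using group.iso_sym K(4) iso_trans by blast
      then show ?thesis using L(4) iso_trans by blast
    qed
  qed
qed

lemma elem2_iso:
  "elem2 G \<Longrightarrow> elem2 H \<Longrightarrow> card (carrier G) = card (carrier H) \<Longrightarrow> G \<cong> H"
  using elem2_iso_aux by blast



definition Nb :: "('a,'b) monoid_scheme \<Rightarrow> 'a \<Rightarrow> 'a set" where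
  "Nb G x = {y \<in> carrier G. cadj G x y}"

definition Dm :: "('a,'b) monoid_scheme \<Rightarrow> 'a set" where
  "Dm G = {x \<in> carrier G. Nb G x = carrier G}"

definition GP :: "('a,'b) monoid_scheme \<Rightarrow> nat \<Rightarrow> bool" where
  "GP G n \<longleftrightarrow> card (Dm G) = n \<and>
    (\<forall>x\<in>carrier G - Dm G. card (Nb G x) = 2 * n \<and> (\<forall>a\<in>Nb G x. \<forall>b\<in>Nb G x. cadj G a b) \<and>
        (\<forall>y\<in>carrier G - Dm G. y \<in> Nb G x \<longrightarrow> Nb G y = Nb G x)) \<and>
    (\<exists>x\<in>carrier G - Dm G. \<exists>y\<in>carrier G - Dm G. y \<notin> Nb G x \<and> Nb G x \<inter> Nb G y = Dm G)"

lemma (in group) subgroup_nat_pow_closed: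
  "subgroup H G \<Longrightarrow> h \<in> H \<Longrightarrow> h [^] (k::nat) \<in> H"
  using subgroup_int_pow_closed[of H h "int k"] by (simp add: int_pow_int)

lemma (in group) pow2_eq: "x \<in> carrier G \<Longrightarrow> x [^] (2::nat) = x \<otimes> x"
  by (simp add: numeral_2_eq_2)

lemma (in group) pow_even: "x \<in> carrier G \<Longrightarrow> x [^] (2 * k::nat) = (x \<otimes> x) [^] k"
  by (simp add: nat_pow_pow[symmetric] pow2_eq)

lemma PG_elem2:
  "elem2 (product_group {..<m} (\<lambda>_. integer_mod_group 2)) \<and>
   card (carrier (product_group {..<m} (\<lambda>_. integer_mod_group 2))) = 2 ^ m"
proof -
  let ?P = "product_group {..<m} (\<lambda>_. integer_mod_group 2)"
  have cP: "carrier ?P = (\<Pi>\<^sub>E i\<in>{..<m}. {0..<2})" by (simp add: carrier_integer_mod_group)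
  have g: "group ?P" by (rule product_group) simp
  have fin: "finite (carrier ?P)" unfolding cP by (intro finite_PiE) auto
  have card: "card (carrier ?P) = 2 ^ m" unfolding cP by (simp add: card_PiE)
  have sq: "x \<otimes>\<^bsub>?P\<^esub> x = \<one>\<^bsub>?P\<^esub>" if "x \<in> carrier ?P" for x
  proof -
    have "(x i + x i) mod 2 = 0" for i :: nat by presburger
    then show ?thesis by (auto simp: fun_eq_iff)
  qed
  show ?thesis using g fin card sq by (simp add: elem2_def)
qed

lemma GP_card: "GP G n \<Longrightarrow> card (Dm G) = n"
  unfolding GP_def by (rule conjunct1)

lemma GP_loc:
  assumes "GP G n" "x \<in> carrier G - Dm G"
  shows "card (Nb G x) = 2 * n \<and> (\<forall>a\<in>Nb G x. \<forall>b\<in>Nb G x. cadj G a b) \<and>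
        (\<forall>y\<in>carrier G - Dm G. y \<in> Nb G x \<longrightarrow> Nb G y = Nb G x)"
proof -
  have "\<forall>x\<in>carrier G - Dm G. card (Nb G x) = 2 * n \<and> (\<forall>a\<in>Nb G x. \<forall>b\<in>Nb G x. cadj G a b) \<and>
        (\<forall>y\<in>carrier G - Dm G. y \<in> Nb G x \<longrightarrow> Nb G y = Nb G x)"
    using assms(1) unfolding GP_def by (rule conjunct1[OF conjunct2])
  then show ?thesis using assms(2) by (rule bspec)
qed

lemma GP_ex:
  assumes "GP G n"
  shows "\<exists>x\<in>carrier G - Dm G. \<exists>y\<in>carrier G - Dm G. y \<notin> Nb G x \<and> Nb G x \<inter> Nb G y = Dm G"
  using assms unfolding GP_def by (rule conjunct2[OF conjunct2])

context group begin

lemma Dm_pow: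
  assumes c: "c \<in> Dm G" shows "cyc G c \<subseteq> Dm G"
proof
  fix z assume z: "z \<in> cyc G c"
  have cG: "c \<in> carrier G" using c by (simp add: Dm_def)
  have zG: "z \<in> carrier G" using z cyc_carrier[OF cG] by auto
  have "Nb G z = carrier G"
  proof
    show "Nb G z \<subseteq> carrier G" by (auto simp: Nb_def)
    show "carrier G \<subseteq> Nb G z"
    proof
      fix y assume y: "y \<in> carrier G"
      then have "y \<in> Nb G c" using c by (simp add: Dm_def)
      then obtain w where w: "w \<in> carrier G" "c \<in> cyc G w" "y \<in> cyc G w" by (auto simp: Nb_def cadj_def)
      have "z \<in> cyc G w" using cyc_mono[OF w(1,2)] z by auto
      then show "y \<in> Nb G z" using w y by (auto simp: Nb_def cadj_def)
    qed
  qed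
  then show "z \<in> Dm G" using zG by (simp add: Dm_def)
qed

lemma Dm_cadj: "d \<in> Dm G \<Longrightarrow> y \<in> carrier G \<Longrightarrow> cadj G d y"
proof -
  assume d: "d \<in> Dm G" and y: "y \<in> carrier G"
  then have "y \<in> Nb G d" by (simp add: Dm_def)
  then show "cadj G d y" by (simp add: Nb_def)
qed

lemma Dm_sub_Nb: "x \<in> carrier G \<Longrightarrow> Dm G \<subseteq> Nb G x"
proof
  fix d assume x: "x \<in> carrier G" and d: "d \<in> Dm G"
  have "cadj G x d" using Dm_cadj[OF d x] by (rule cadj_sym)
  then show "d \<in> Nb G x" using d by (simp add: Nb_def Dm_def)
qed

lemma Dm_central: "d \<in> Dm G \<Longrightarrow> y \<in> carrier G \<Longrightarrow> d \<otimes> y = y \<otimes> d"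
  by (rule cadj_comm[OF Dm_cadj])

lemma Nb_cyc:
  assumes fin: "finite (carrier G)" and gp: "GP G n" and x: "x \<in> carrier G - Dm G"
  shows "\<exists>g\<in>carrier G. Nb G x = cyc G g"
proof -
  have L: "card (Nb G x) = 2 * n \<and> (\<forall>a\<in>Nb G x. \<forall>b\<in>Nb G x. cadj G a b) \<and>
        (\<forall>y\<in>carrier G - Dm G. y \<in> Nb G x \<longrightarrow> Nb G y = Nb G x)" by (rule GP_loc[OF gp x])
  have clique: "\<And>a b. a \<in> Nb G x \<Longrightarrow> b \<in> Nb G x \<Longrightarrow> cadj G a b"
    using L by blast
  have cls: "\<And>y. y \<in> carrier G - Dm G \<Longrightarrow> y \<in> Nb G x \<Longrightarrow> Nb G y = Nb G x"
    using L by blast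
  let ?S = "Nb G x - Dm G"
  have xS: "x \<in> ?S" using x cadj_refl by (auto simp: Nb_def)
  have finS: "finite ?S" using fin by (auto simp: Nb_def intro: rev_finite_subset)
  obtain g where gS: "g \<in> ?S" and gmax: "\<And>a. a \<in> ?S \<Longrightarrow> card (cyc G a) \<le> card (cyc G g)"
    using exists_max_nat[OF finS, of "\<lambda>a. card (cyc G a)"] xS by auto
  have gG: "g \<in> carrier G" using gS by (auto simp: Nb_def)
  have Ng: "Nb G g = Nb G x" using cls gS gG by auto
  have "cyc G g \<subseteq> Nb G g"
  proof
    fix z assume z: "z \<in> cyc G g"
    then have "cadj G g z" unfolding cadj_def using gG cyc_self[OF gG] by blast
    then show "z \<in> Nb G g" using z cyc_carrier[OF gG] by (auto simp: Nb_def)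
  qed
  moreover have "Nb G x \<subseteq> cyc G g"
  proof
    fix a assume a: "a \<in> Nb G x"
    have "cadj G g a" using clique gS a by auto
    then obtain c where c: "c \<in> carrier G" "g \<in> cyc G c" "a \<in> cyc G c" by (auto simp: cadj_def)
    have cD: "c \<notin> Dm G"
    proof
      assume "c \<in> Dm G"
      then have "g \<in> Dm G" using Dm_pow c(2) by auto
      then show False using gS by auto
    qed
    have "cadj G g c" unfolding cadj_def using c cyc_self[OF c(1)] by blast
    then have "c \<in> Nb G g" using c by (simp add: Nb_def)
    then have "c \<in> ?S" using Ng cD by auto
    then have "card (cyc G c) \<le> card (cyc G g)" by (rule gmax)
    then have "cyc G g = cyc G c" using cyc_max_eq[OF fin c(1,2)] by simp
    then show "a \<in> cyc G g" using c by simp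
  qed
  ultimately show ?thesis using Ng gG by auto
qed


lemma GP_structure:
  assumes fin: "finite (carrier G)" and gp: "GP G n" and odd: "odd n"
    and cardG: "card (carrier G) = 2 ^ m * n"
  shows "G \<cong> Z2m_Zn m n"
proof -
  define D where "D = Dm G"
  have DG: "D \<subseteq> carrier G" by (auto simp: D_def Dm_def)
  have cardD: "card D = n" using GP_card[OF gp] by (simp add: D_def)
  have n0: "n > 0" using odd by (cases n) auto
  obtain x0 y0 where x0: "x0 \<in> carrier G - Dm G" and y0: "y0 \<in> carrier G - Dm G"
    and DI: "Nb G x0 \<inter> Nb G y0 = Dm G"
    using GP_ex[OF gp] by blast
  obtain g0 where g0: "g0 \<in> carrier G" "Nb G x0 = cyc G g0" using Nb_cyc[OF fin gp x0] by blast
  obtain g1 where g1: "g1 \<in> carrier G" "Nb G y0 = cyc G g1" using Nb_cyc[OF fin gp y0] by blast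
  have Deq: "D = cyc G g0 \<inter> cyc G g1" using DI g0 g1 by (simp add: D_def)
  have subD: "subgroup D G" unfolding Deq
    by (rule subgroup_Int[OF cyc_subgroup[OF g0(1)] cyc_subgroup[OF g1(1)]])
  have "D \<subseteq> cyc G g0" using Deq by blast
  then obtain d0 where d0: "d0 \<in> D" "D = cyc G d0" using subgroup_of_cyc[OF subD g0(1)] by blast
  have central: "\<And>d y. d \<in> D \<Longrightarrow> y \<in> carrier G \<Longrightarrow> d \<otimes> y = y \<otimes> d"
    unfolding D_def by (rule Dm_central)
  have finD: "finite D" using fin DG by (rule rev_finite_subset)
  have cSD: "carrier (subgroup_generated G D) = D"
    by (rule subgroup.carrier_subgroup_generated_subgroup[OF subD])
  have Dn: "\<And>d. d \<in> D \<Longrightarrow> d [^] n = \<one>"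
  proof -
    fix d assume d: "d \<in> D"
    interpret SD: group "subgroup_generated G D" by simp
    have "d [^]\<^bsub>subgroup_generated G D\<^esub> order (subgroup_generated G D) = \<one>\<^bsub>subgroup_generated G D\<^esub>"
      by (rule SD.pow_order_eq_1) (simp add: cSD d)
    then show "d [^] n = \<one>" by (simp add: pow_subgroup_generated order_def cSD cardD)
  qed
  have oddD: "\<And>d. d \<in> D \<Longrightarrow> d \<otimes> d = \<one> \<Longrightarrow> d = \<one>"
  proof -
    fix d assume d: "d \<in> D" "d \<otimes> d = \<one>"
    have dG: "d \<in> carrier G" using d DG by auto
    obtain k where k: "n = 2 * k + 1" using odd oddE by blast
    have "d [^] n = (d [^] (2*k)) \<otimes> d [^] (1::nat)" using dG k by (simp add: nat_pow_mult)
    also have "d [^] (2*k) = \<one>" using pow_even[OF dG] d(2) by simp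
    finally show "d = \<one>" using Dn[OF d(1)] dG by simp
  qed
  have sq: "\<And>x. x \<in> carrier G \<Longrightarrow> x \<otimes> x \<in> D"
  proof -
    fix x assume x: "x \<in> carrier G"
    show "x \<otimes> x \<in> D"
    proof (cases "x \<in> D")
      case True then show ?thesis using subD by (simp add: subgroup.m_closed)
    next
      case False
      then have xD: "x \<in> carrier G - Dm G" using x by (simp add: D_def)
      obtain g where g: "g \<in> carrier G" "Nb G x = cyc G g" using Nb_cyc[OF fin gp xD] by blast
      define K where "K = Nb G x"
      have subK: "subgroup K G" using g cyc_subgroup by (simp add: K_def)
      have cardK: "card K = 2 * n" using GP_loc[OF gp xD] by (simp add: K_def)
      have DK: "D \<subseteq> K" using Dm_sub_Nb[OF x] by (simp add: K_def D_def)
      have "cadj G x x" using cadj_refl[OF x] .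
      then have xK: "x \<in> K" using x by (simp add: K_def Nb_def)
      let ?xD = "(\<lambda>d. x \<otimes> d) ` D"
      have xDK: "?xD \<subseteq> K"
      proof (rule image_subsetI)
        fix d assume "d \<in> D"
        then have "d \<in> K" using DK by blast
        then show "x \<otimes> d \<in> K" by (rule subgroup.m_closed[OF subK xK])
      qed
      have disj: "D \<inter> ?xD = {}"
      proof -
        have False if "d \<in> D" "x \<otimes> d \<in> D" for d
        proof -
          have dG: "d \<in> carrier G" using that DG by auto
          have "x = (x \<otimes> d) \<otimes> inv d" using x dG by (simp add: m_assoc)
          moreover have "(x \<otimes> d) \<otimes> inv d \<in> D"
            by (rule subgroup.m_closed[OF subD that(2) subgroup.m_inv_closed[OF subD that(1)]])
          ultimately have "x \<in> D" by simp
          then show False using False by simp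
        qed
        then show ?thesis by blast
      qed
      have inj: "inj_on (\<lambda>d. x \<otimes> d) D"
      proof (rule inj_onI)
        fix a b assume "a \<in> D" "b \<in> D" "x \<otimes> a = x \<otimes> b"
        then show "a = b" using DG x l_cancel by blast
      qed
      have cxD: "card ?xD = n" using card_image[OF inj] cardD by simp
      have finxD: "finite ?xD" using finD by simp
      have cU: "card (D \<union> ?xD) = 2 * n" using card_Un_disjoint[OF finD finxD disj] cardD cxD by simp
      have finK: "finite K" by (rule rev_finite_subset[OF fin subgroup.subset[OF subK]])
      have UK: "D \<union> ?xD \<subseteq> K" using DK xDK by blast
      have KU: "D \<union> ?xD = K" using card_seteq[OF finK UK] cU cardK by simp
      have "x \<otimes> x \<in> K" by (rule subgroup.m_closed[OF subK xK xK])
      moreover have "x \<otimes> x \<notin> ?xD"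
      proof
        assume "x \<otimes> x \<in> ?xD"
        then obtain d where d: "d \<in> D" "x \<otimes> x = x \<otimes> d" by auto
        then have "x = d" using x DG l_cancel by blast
        then show False using False d by simp
      qed
      ultimately show ?thesis using KU by blast
    qed
  qed
  have comm: "\<And>x y. x \<in> carrier G \<Longrightarrow> y \<in> carrier G \<Longrightarrow> x \<otimes> y = y \<otimes> x"
  proof -
    fix x y assume x: "x \<in> carrier G" and y: "y \<in> carrier G"
    define a where "a = (x \<otimes> y) \<otimes> (x \<otimes> y)"
    define b where "b = x \<otimes> x"
    define c where "c = y \<otimes> y"
    have aD: "a \<in> D" unfolding a_def using sq x y by simp
    have bD: "b \<in> D" and cD: "c \<in> D" using sq x y by (simp_all add: b_def c_def)
    have bG: "b \<in> carrier G" and cG: "c \<in> carrier G" and aG: "a \<in> carrier G" using aD bD cD DG by auto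
    define z where "z = a \<otimes> inv (b \<otimes> c)"
    have zD: "z \<in> D" unfolding z_def using aD bD cD subD
      by (simp add: subgroup.m_closed subgroup.m_inv_closed)
    have zG: "z \<in> carrier G" using zD DG by auto
    have e1: "y \<otimes> (x \<otimes> (x \<otimes> y)) = b \<otimes> c"
    proof -
      have "y \<otimes> (x \<otimes> (x \<otimes> y)) = y \<otimes> (b \<otimes> y)" by (simp add: b_def m_assoc x y)
      also have "\<dots> = y \<otimes> (y \<otimes> b)" using central[OF bD y] by simp
      also have "\<dots> = c \<otimes> b" by (simp add: c_def m_assoc y bG)
      also have "\<dots> = b \<otimes> c" using central[OF bD cG] by simp
      finally show ?thesis .
    qed
    have e2: "z \<otimes> (y \<otimes> (x \<otimes> (x \<otimes> y))) = a" unfolding z_def e1 using aG bG cG by (simp add: m_assoc)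
    have e3: "(z \<otimes> (y \<otimes> x)) \<otimes> (x \<otimes> y) = (x \<otimes> y) \<otimes> (x \<otimes> y)"
      using e2 by (simp add: a_def m_assoc x y zG)
    have u: "x \<otimes> y = z \<otimes> (y \<otimes> x)" using e3 r_cancel x y zG by simp
    have zx: "x \<otimes> z = z \<otimes> x" using central[OF zD x] by simp
    have f1: "x \<otimes> (x \<otimes> y) = (z \<otimes> z) \<otimes> (y \<otimes> (x \<otimes> x))"
    proof -
      have "x \<otimes> (x \<otimes> y) = x \<otimes> (z \<otimes> (y \<otimes> x))" by (simp only: u)
      also have "\<dots> = (x \<otimes> z) \<otimes> (y \<otimes> x)" using x y zG by (simp add: m_assoc)
      also have "\<dots> = (z \<otimes> x) \<otimes> (y \<otimes> x)" by (simp only: zx)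
      also have "\<dots> = z \<otimes> ((x \<otimes> y) \<otimes> x)" using x y zG by (simp add: m_assoc)
      also have "\<dots> = z \<otimes> ((z \<otimes> (y \<otimes> x)) \<otimes> x)" by (simp only: u)
      also have "\<dots> = (z \<otimes> z) \<otimes> (y \<otimes> (x \<otimes> x))" using x y zG by (simp add: m_assoc)
      finally show ?thesis .
    qed
    have f2: "x \<otimes> (x \<otimes> y) = y \<otimes> (x \<otimes> x)"
    proof -
      have "x \<otimes> (x \<otimes> y) = b \<otimes> y" using x y by (simp add: b_def m_assoc)
      also have "\<dots> = y \<otimes> b" using central[OF bD y] .
      finally show ?thesis by (simp add: b_def)
    qed
    have "(z \<otimes> z) \<otimes> (y \<otimes> (x \<otimes> x)) = \<one> \<otimes> (y \<otimes> (x \<otimes> x))" using f1 f2 x y by simp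
    then have "z \<otimes> z = \<one>" using r_cancel x y zG by (meson m_closed one_closed)
    then have "z = \<one>" using oddD zD by blast
    then show "x \<otimes> y = y \<otimes> x" using u x y by simp
  qed
  interpret cg: comm_group G by (rule group_comm_groupI) (use comm in auto)
  define P where "P = {x \<in> carrier G. x \<otimes> x = \<one>}"
  have subP: "subgroup P G"
  proof (rule subgroupI)
    show "P \<subseteq> carrier G" by (auto simp: P_def)
    show "P \<noteq> {}" using one_closed by (auto simp: P_def)
    show "inv a \<in> P" if a: "a \<in> P" for a
    proof -
      have aG: "a \<in> carrier G" and aa: "a \<otimes> a = \<one>" using a by (auto simp: P_def)
      have "inv a \<otimes> inv a = inv (a \<otimes> a)" using aG by (simp add: inv_mult_group)
      then show ?thesis using aG aa by (simp add: P_def)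
    qed
    show "a \<otimes> b \<in> P" if a: "a \<in> P" and b: "b \<in> P" for a b
    proof -
      have aG: "a \<in> carrier G" and aa: "a \<otimes> a = \<one>" using a by (auto simp: P_def)
      have bG: "b \<in> carrier G" and bb: "b \<otimes> b = \<one>" using b by (auto simp: P_def)
      have "(a \<otimes> b) \<otimes> (a \<otimes> b) = (a \<otimes> a) \<otimes> (b \<otimes> b)" using aG bG by (simp add: cg.m_ac)
      then show ?thesis using aG bG aa bb by (simp add: P_def)
    qed
  qed
  have DP1: "D \<inter> P \<subseteq> {\<one>}" using oddD by (auto simp: P_def)
  have pow2n: "\<And>x. x \<in> carrier G \<Longrightarrow> x [^] (2*n) = \<one>" using pow_even sq Dn by simp
  have DPc: "D <#> P = carrier G"
  proof
    show "D <#> P \<subseteq> carrier G" using DG by (auto simp: set_mult_def P_def)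
    show "carrier G \<subseteq> D <#> P"
    proof
      fix x assume x: "x \<in> carrier G"
      obtain k where k: "n = 2*k+1" using odd oddE by blast
      have "x [^] (2 * (k+1)) = (x \<otimes> x) [^] (k+1)" by (rule pow_even[OF x])
      moreover have "(x \<otimes> x) [^] (k+1) \<in> D" by (rule subgroup_nat_pow_closed[OF subD sq[OF x]])
      ultimately have e1: "x [^] (n+1) \<in> D" using k by (simp add: algebra_simps)
      have "x [^] n \<otimes> x [^] n = x [^] (2*n)" using x by (simp add: nat_pow_mult mult_2)
      then have e2: "x [^] n \<in> P" using pow2n[OF x] x by (simp add: P_def)
      have "x [^] (n+1) \<otimes> x [^] n = x [^] (n+1+n)" by (rule nat_pow_mult[OF x])
      also have nn: "n+1+n = Suc (2*n)" by simp
      have "x [^] (n+1+n) = x [^] (2*n) \<otimes> x" by (simp only: nn nat_pow_Suc)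
      finally have "x [^] (n+1) \<otimes> x [^] n = x" using pow2n[OF x] x by simp
      then show "x \<in> D <#> P" unfolding set_mult_def using e1 e2 by force
    qed
  qed
  interpret gds: group_disjoint_sum G D P by (simp add: group_disjoint_sum_def subD subP is_group)
  have iso1: "(\<lambda>(x,y). x \<otimes> y) \<in> iso (subgroup_generated G D \<times>\<times> subgroup_generated G P) G"
    using gds.iso_group_mul cg.comm_group_axioms DP1 DPc by blast
  have cSP: "carrier (subgroup_generated G P) = P"
    by (rule subgroup.carrier_subgroup_generated_subgroup[OF subP])
  have "card (carrier (subgroup_generated G D \<times>\<times> subgroup_generated G P)) = card (carrier G)"
    using iso1 unfolding iso_def by (blast intro: bij_betw_same_card)
  then have "card D * card P = 2 ^ m * n" using cSD cSP cardG by (simp add: card_cartesian_product)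
  then have "n * card P = n * 2 ^ m" using cardD by (simp add: mult.commute)
  then have cardP: "card P = 2 ^ m" using n0 by simp
  have PG: "P \<subseteq> carrier G" unfolding P_def by (rule Collect_restrict)
  have finP: "finite P" by (rule rev_finite_subset[OF fin PG])
  have sqP: "\<forall>x\<in>carrier (subgroup_generated G P). x \<otimes>\<^bsub>subgroup_generated G P\<^esub> x = \<one>\<^bsub>subgroup_generated G P\<^esub>"
  proof
    fix x assume "x \<in> carrier (subgroup_generated G P)"
    then have "x \<in> P" using cSP by simp
    then show "x \<otimes>\<^bsub>subgroup_generated G P\<^esub> x = \<one>\<^bsub>subgroup_generated G P\<^esub>"
      unfolding P_def by simp
  qed
  have eP: "elem2 (subgroup_generated G P)" unfolding elem2_def using cSP finP sqP by simp
  have PP: "subgroup_generated G P \<cong> product_group {..<m} (\<lambda>_. integer_mod_group 2)"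
  proof (rule elem2_iso[OF eP])
    show "elem2 (product_group {..<m} (\<lambda>_. integer_mod_group 2))" using PG_elem2 by blast
    show "card (carrier (subgroup_generated G P)) = card (carrier (product_group {..<m} (\<lambda>_. integer_mod_group 2)))"
      using PG_elem2[of m] cSP cardP by simp
  qed
  have DZ: "subgroup_generated G D \<cong> integer_mod_group n"
  proof -
    have d0S: "d0 \<in> carrier (subgroup_generated G D)" using cSD d0 by simp
    have "cyc (subgroup_generated G D) d0 = cyc G d0"
      unfolding cyc_def using int_pow_subgroup_generated[OF d0S] by simp
    then have "carrier (subgroup_generated G D) = cyc (subgroup_generated G D) d0" using cSD d0 by simp
    then have "integer_mod_group n \<cong> subgroup_generated G D"
      by (intro cyclic_iso_Zn[OF _ _ d0S]) (simp_all add: cSD finD cardD)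
    then show ?thesis using group.iso_sym group_integer_mod_group by blast
  qed
  have gSD: "group (subgroup_generated G D)" by simp
  have gSP: "group (subgroup_generated G P)" by simp
  have "subgroup_generated G D \<times>\<times> subgroup_generated G P \<cong> integer_mod_group n \<times>\<times> product_group {..<m} (\<lambda>_. integer_mod_group 2)"
    using group.DirProd_iso_trans[OF gSD DZ PP] .
  also have "\<dots> \<cong> Z2m_Zn m n" unfolding Z2m_Zn_def by (rule DirProd_commute_iso)
  finally have X1: "subgroup_generated G D \<times>\<times> subgroup_generated G P \<cong> Z2m_Zn m n" .
  have "G \<cong> subgroup_generated G D \<times>\<times> subgroup_generated G P"
    using group.iso_sym[OF DirProd_group[OF gSD gSP] is_isoI[OF iso1]] .
  then show ?thesis using X1 iso_trans by blast
qed

end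



abbreviation PGm :: "nat \<Rightarrow> (nat \<Rightarrow> int) monoid" where
  "PGm m \<equiv> product_group {..<m} (\<lambda>_. integer_mod_group 2)"

lemma group_PGm: "group (PGm m)" by (rule product_group) simp

lemma carrier_PGm: "carrier (PGm m) = (\<Pi>\<^sub>E i\<in>{..<m}. {0..<2})"
  by (simp add: carrier_integer_mod_group)

lemma one_PGm: "\<one>\<^bsub>PGm m\<^esub> = (\<lambda>i\<in>{..<m}. 0)" by simp

lemma group_H: "group (Z2m_Zn m n)"
  unfolding Z2m_Zn_def by (rule DirProd_group[OF group_PGm group_integer_mod_group])

lemma carrier_H: "carrier (Z2m_Zn m n) = carrier (PGm m) \<times> carrier (integer_mod_group n)"
  unfolding Z2m_Zn_def by simp

lemma pow_PG:
  assumes u: "u \<in> carrier (PGm m)"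
  shows "u [^]\<^bsub>PGm m\<^esub> (a::int) = (if even a then \<one>\<^bsub>PGm m\<^esub> else u)"
proof -
  have gP: "group (PGm m)" by (rule group_PGm)
  have ua: "u [^]\<^bsub>PGm m\<^esub> a \<in> carrier (PGm m)" using group.int_pow_closed[OF gP u] .
  have ev: "(u [^]\<^bsub>PGm m\<^esub> a) i = (a * u i) mod 2" if i: "i \<in> {..<m}" for i
  proof -
    have hom: "(\<lambda>f. f i) \<in> hom (PGm m) (integer_mod_group 2)"
    proof (rule homI)
      show "f i \<in> carrier (integer_mod_group 2)" if "f \<in> carrier (PGm m)" for f
        using that i by (auto simp: PiE_iff)
      show "(f \<otimes>\<^bsub>PGm m\<^esub> g) i = f i \<otimes>\<^bsub>integer_mod_group 2\<^esub> g i" for f g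
        using i by simp
    qed
    have "(u [^]\<^bsub>PGm m\<^esub> a) i = (u i) [^]\<^bsub>integer_mod_group 2\<^esub> a"
      using hom_int_pow[OF hom u gP group_integer_mod_group] .
    then show ?thesis by (simp add: int_pow_integer_mod_group)
  qed
  have ui: "u i = 0 \<or> u i = 1" if "i \<in> {..<m}" for i
  proof -
    have "u \<in> (\<Pi>\<^sub>E i\<in>{..<m}. {0..<2})" using u by (simp only: carrier_PGm)
    then have "u i \<in> {0..<2}" using that by (simp add: PiE_iff)
    then show ?thesis by auto
  qed
  have rhs: "(if even a then \<one>\<^bsub>PGm m\<^esub> else u) \<in> carrier (PGm m)"
    using u monoid.one_closed[OF group.is_monoid[OF gP]] by simp
  show ?thesis
  proof (rule PiE_ext[OF _ _ ])
    show "u [^]\<^bsub>PGm m\<^esub> a \<in> (\<Pi>\<^sub>E i\<in>{..<m}. {0..<2})" using ua by (simp only: carrier_PGm)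
    show "(if even a then \<one>\<^bsub>PGm m\<^esub> else u) \<in> (\<Pi>\<^sub>E i\<in>{..<m}. {0..<2})" using rhs by (simp only: carrier_PGm)
    fix i assume i: "i \<in> {..<m}"
    show "(u [^]\<^bsub>PGm m\<^esub> a) i = (if even a then \<one>\<^bsub>PGm m\<^esub> else u) i"
    proof (cases "even a")
      case True
      then have "even (a * u i)" by simp
      then have "(a * u i) mod 2 = 0" by presburger
      then show ?thesis using True ev[OF i] i by simp
    next
      case False
      then have "(a * u i) mod 2 = u i" using ui[OF i] by (auto simp: odd_iff_mod_2_eq_one)
      then show ?thesis using False ev[OF i] by simp
    qed
  qed
qed

lemma pow_H:
  assumes x: "x \<in> carrier (Z2m_Zn m n)"
  shows "x [^]\<^bsub>Z2m_Zn m n\<^esub> (a::int) = (fst x [^]\<^bsub>PGm m\<^esub> a, snd x [^]\<^bsub>integer_mod_group n\<^esub> a)"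
proof -
  have h1: "fst \<in> hom (Z2m_Zn m n) (PGm m)"
  proof (rule homI)
    show "fst x \<in> carrier (PGm m)" if "x \<in> carrier (Z2m_Zn m n)" for x
      using that by (simp only: carrier_H mem_Times_iff)
    show "fst (x \<otimes>\<^bsub>Z2m_Zn m n\<^esub> y) = fst x \<otimes>\<^bsub>PGm m\<^esub> fst y" for x y
      unfolding Z2m_Zn_def by (simp only: mult_DirProd' fst_conv)
  qed
  have h2: "snd \<in> hom (Z2m_Zn m n) (integer_mod_group n)"
  proof (rule homI)
    show "snd x \<in> carrier (integer_mod_group n)" if "x \<in> carrier (Z2m_Zn m n)" for x
      using that by (simp only: carrier_H mem_Times_iff)
    show "snd (x \<otimes>\<^bsub>Z2m_Zn m n\<^esub> y) = snd x \<otimes>\<^bsub>integer_mod_group n\<^esub> snd y" for x y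
      unfolding Z2m_Zn_def by (simp only: mult_DirProd' snd_conv)
  qed
  show ?thesis
    using hom_int_pow[OF h1 x group_H group_PGm] hom_int_pow[OF h2 x group_H group_integer_mod_group]
    by (simp add: prod_eq_iff)
qed

lemma cyc_H_fst:
  assumes w: "w \<in> carrier (Z2m_Zn m n)" and x: "x \<in> cyc (Z2m_Zn m n) w"
  shows "fst x = \<one>\<^bsub>PGm m\<^esub> \<or> fst x = fst w"
proof -
  obtain a :: int where "x = w [^]\<^bsub>Z2m_Zn m n\<^esub> a" using x by (auto simp: cyc_def)
  then have "fst x = fst w [^]\<^bsub>PGm m\<^esub> a" using pow_H[OF w] by simp
  moreover have "fst w \<in> carrier (PGm m)" using w by (simp add: carrier_H mem_Times_iff)
  ultimately show ?thesis using pow_PG by simp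
qed

lemma cyc_H_mem:
  assumes n: "0 < n" "odd n" and u: "u \<in> carrier (PGm m)" and h: "h = \<one>\<^bsub>PGm m\<^esub> \<or> h = u"
    and k: "k \<in> carrier (integer_mod_group n)"
  shows "(h, k) \<in> cyc (Z2m_Zn m n) (u, 1 mod int n)"
proof -
  have k': "0 \<le> k" "k < int n" using k n by (auto simp: carrier_integer_mod_group)
  have w: "(u, 1 mod int n) \<in> carrier (Z2m_Zn m n)" using u n
    by (simp add: carrier_H carrier_integer_mod_group)
  define a where "a = (if (h = \<one>\<^bsub>PGm m\<^esub>) = even k then k else k + int n)"
  have amod: "a mod int n = k" using k' by (simp add: a_def)
  have par: "(if even a then \<one>\<^bsub>PGm m\<^esub> else u) = h"
  proof (cases "h = \<one>\<^bsub>PGm m\<^esub>")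
    case True
    then have "even a" using n(2) by (auto simp: a_def)
    then show ?thesis using True by simp
  next
    case False
    then have "odd a" using n(2) by (auto simp: a_def)
    then show ?thesis using False h by simp
  qed
  have "w2": "snd (u, 1 mod int n) [^]\<^bsub>integer_mod_group n\<^esub> a = k"
  proof -
    have "snd (u, 1 mod int n) [^]\<^bsub>integer_mod_group n\<^esub> a = (a * (1 mod int n)) mod int n"
      by (simp add: int_pow_integer_mod_group)
    also have "\<dots> = (a * 1) mod int n" by (rule mod_mult_right_eq)
    finally show ?thesis using amod by simp
  qed
  have "(u, 1 mod int n) [^]\<^bsub>Z2m_Zn m n\<^esub> a = (h, k)"
    using pow_H[OF w, of a] pow_PG[OF u, of a] par w2 by simp
  then show ?thesis unfolding cyc_def by (rule range_eqI[OF sym])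
qed

lemma cadj_H:
  assumes n: "0 < n" "odd n" and x: "x \<in> carrier (Z2m_Zn m n)" and y: "y \<in> carrier (Z2m_Zn m n)"
  shows "cadj (Z2m_Zn m n) x y \<longleftrightarrow> fst x = \<one>\<^bsub>PGm m\<^esub> \<or> fst y = \<one>\<^bsub>PGm m\<^esub> \<or> fst x = fst y"
proof
  assume "cadj (Z2m_Zn m n) x y"
  then obtain w where w: "w \<in> carrier (Z2m_Zn m n)" "x \<in> cyc (Z2m_Zn m n) w" "y \<in> cyc (Z2m_Zn m n) w"
    unfolding cadj_def by blast
  show "fst x = \<one>\<^bsub>PGm m\<^esub> \<or> fst y = \<one>\<^bsub>PGm m\<^esub> \<or> fst x = fst y"
    using cyc_H_fst[OF w(1,2)] cyc_H_fst[OF w(1,3)] by auto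
next
  assume A: "fst x = \<one>\<^bsub>PGm m\<^esub> \<or> fst y = \<one>\<^bsub>PGm m\<^esub> \<or> fst x = fst y"
  have xs: "fst x \<in> carrier (PGm m)" "snd x \<in> carrier (integer_mod_group n)"
    and ys: "fst y \<in> carrier (PGm m)" "snd y \<in> carrier (integer_mod_group n)"
    using x y by (auto simp: carrier_H mem_Times_iff)
  obtain u where u: "u \<in> carrier (PGm m)" "fst x = \<one>\<^bsub>PGm m\<^esub> \<or> fst x = u" "fst y = \<one>\<^bsub>PGm m\<^esub> \<or> fst y = u"
    using A xs ys by blast
  have w: "(u, 1 mod int n) \<in> carrier (Z2m_Zn m n)" using u n
    by (simp add: carrier_H carrier_integer_mod_group)
  have "(fst x, snd x) \<in> cyc (Z2m_Zn m n) (u, 1 mod int n)" by (rule cyc_H_mem[OF n u(1) u(2) xs(2)])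
  moreover have "(fst y, snd y) \<in> cyc (Z2m_Zn m n) (u, 1 mod int n)" by (rule cyc_H_mem[OF n u(1) u(3) ys(2)])
  ultimately show "cadj (Z2m_Zn m n) x y" unfolding cadj_def using w by auto
qed



lemma mem_H: "x \<in> carrier (Z2m_Zn m n) \<longleftrightarrow> fst x \<in> carrier (PGm m) \<and> snd x \<in> carrier (integer_mod_group n)"
  by (simp only: carrier_H mem_Times_iff)

declare carrier_product_group [simp del] one_product_group [simp del]

lemma Nb_carrier: "y \<in> Nb G x \<Longrightarrow> y \<in> carrier G"
  unfolding Nb_def by simp

lemma Nb_cadj: "y \<in> Nb G x \<Longrightarrow> cadj G x y"
  unfolding Nb_def by simp

lemma Nb_I: "y \<in> carrier G \<Longrightarrow> cadj G x y \<Longrightarrow> y \<in> Nb G x"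
  unfolding Nb_def by simp

lemma card_PGm: "card (carrier (PGm m)) = 2 ^ m" and finite_PGm: "finite (carrier (PGm m))"
  using PG_elem2[of m] by (auto simp: elem2_def)

lemma card_Zn: "0 < n \<Longrightarrow> card (carrier (integer_mod_group n)) = n"
  by (simp add: carrier_integer_mod_group)

lemma card_H: "0 < n \<Longrightarrow> card (carrier (Z2m_Zn m n)) = 2 ^ m * n"
proof -
  assume n: "0 < n"
  have "card (carrier (Z2m_Zn m n)) = card (carrier (PGm m)) * card (carrier (integer_mod_group n))"
    by (simp only: carrier_H card_cartesian_product)
  also have "\<dots> = 2 ^ m * n" by (simp only: card_PGm card_Zn[OF n])
  finally show ?thesis .
qed

lemma finite_H: "0 < n \<Longrightarrow> finite (carrier (Z2m_Zn m n))"
  unfolding carrier_H by (rule finite_cartesian_product[OF finite_PGm]) (simp add: carrier_integer_mod_group)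

lemma PG_other:
  assumes m: "2 \<le> m" and f: "f \<in> carrier (PGm m)"
  shows "\<exists>g\<in>carrier (PGm m). g \<noteq> \<one>\<^bsub>PGm m\<^esub> \<and> g \<noteq> f"
proof (rule ccontr)
  assume "\<not> ?thesis"
  then have "carrier (PGm m) \<subseteq> {\<one>\<^bsub>PGm m\<^esub>, f}" by blast
  then have "card (carrier (PGm m)) \<le> card {\<one>\<^bsub>PGm m\<^esub>, f}" by (intro card_mono) auto
  also have "\<dots> \<le> 2" by (simp add: card_insert_le_m1)
  finally have "card (carrier (PGm m)) \<le> 2" .
  then have "2 ^ m \<le> (2::nat)" by (simp only: card_PGm)
  moreover have "(2::nat) ^ 2 \<le> 2 ^ m" using m by (intro power_increasing) auto
  ultimately show False by simp
qed

lemma PG_one: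
  assumes f: "f \<in> carrier (PGm 1)" and g: "g \<in> carrier (PGm 1)"
  shows "f = \<one>\<^bsub>PGm 1\<^esub> \<or> g = \<one>\<^bsub>PGm 1\<^esub> \<or> f = g"
proof -
  have fP: "f \<in> (\<Pi>\<^sub>E i\<in>{..<1}. {0..<2})" and gP: "g \<in> (\<Pi>\<^sub>E i\<in>{..<1}. {0..<2})"
    using f g by (simp_all only: carrier_PGm)
  have oP: "\<one>\<^bsub>PGm 1\<^esub> \<in> (\<Pi>\<^sub>E i\<in>{..<1}. {0..<2::int})"
    using monoid.one_closed[OF group.is_monoid[OF group_PGm], of 1] by (simp only: carrier_PGm)
  have o0: "\<one>\<^bsub>PGm 1\<^esub> 0 = 0" by (simp only: one_PGm) simp
  have f0: "f 0 = 0 \<or> f 0 = 1" and g0: "g 0 = 0 \<or> g 0 = 1"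
  proof -
    have "f 0 \<in> {0..<2}" "g 0 \<in> {0..<2}" using fP gP by (auto simp: PiE_iff)
    then show "f 0 = 0 \<or> f 0 = 1" "g 0 = 0 \<or> g 0 = 1" by auto
  qed
  have e: "\<And>i. i \<in> {..<1::nat} \<Longrightarrow> i = 0" by simp
  have A: "f = \<one>\<^bsub>PGm 1\<^esub>" if "f 0 = 0"
    by (rule PiE_ext[OF fP oP]) (use that o0 e in metis)
  have B: "g = \<one>\<^bsub>PGm 1\<^esub>" if "g 0 = 0"
    by (rule PiE_ext[OF gP oP]) (use that o0 e in metis)
  have C: "f = g" if "f 0 = 1" "g 0 = 1"
    by (rule PiE_ext[OF fP gP]) (use that e in metis)
  show ?thesis using f0 g0 A B C by blast
qed

lemma all_cadj_H1:
  assumes n: "0 < n" "odd n" and x: "x \<in> carrier (Z2m_Zn 1 n)" and y: "y \<in> carrier (Z2m_Zn 1 n)"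
  shows "cadj (Z2m_Zn 1 n) x y"
proof -
  have "fst x \<in> carrier (PGm 1)" "fst y \<in> carrier (PGm 1)" using x y by (simp_all add: mem_H)
  then show ?thesis using cadj_H[OF n x y] PG_one by blast
qed

lemma Nb_H:
  assumes n: "0 < n" "odd n" and x: "x \<in> carrier (Z2m_Zn m n)" and x1: "fst x \<noteq> \<one>\<^bsub>PGm m\<^esub>"
  shows "Nb (Z2m_Zn m n) x = {\<one>\<^bsub>PGm m\<^esub>, fst x} \<times> carrier (integer_mod_group n)"
proof -
  have fx: "fst x \<in> carrier (PGm m)" using x by (simp add: mem_H)
  have o: "\<one>\<^bsub>PGm m\<^esub> \<in> carrier (PGm m)" using monoid.one_closed[OF group.is_monoid[OF group_PGm]] .
  show ?thesis
  proof (intro equalityI subsetI)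
    fix y assume "y \<in> Nb (Z2m_Zn m n) x"
    then have y: "y \<in> carrier (Z2m_Zn m n)" and c: "cadj (Z2m_Zn m n) x y" unfolding Nb_def by blast+
    then have "fst y = \<one>\<^bsub>PGm m\<^esub> \<or> fst y = fst x" using cadj_H[OF n x y] x1 by auto
    then show "y \<in> {\<one>\<^bsub>PGm m\<^esub>, fst x} \<times> carrier (integer_mod_group n)"
      using y by (auto simp: mem_H mem_Times_iff)
  next
    fix y assume y: "y \<in> {\<one>\<^bsub>PGm m\<^esub>, fst x} \<times> carrier (integer_mod_group n)"
    then have yH: "y \<in> carrier (Z2m_Zn m n)" using fx o by (auto simp: mem_H mem_Times_iff)
    have "fst y = \<one>\<^bsub>PGm m\<^esub> \<or> fst y = fst x" using y by auto
    then have "cadj (Z2m_Zn m n) x y" using cadj_H[OF n x yH] by auto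
    then show "y \<in> Nb (Z2m_Zn m n) x" using yH by (simp add: Nb_def)
  qed
qed

lemma Dm_H:
  assumes n: "0 < n" "odd n" and m: "2 \<le> m"
  shows "Dm (Z2m_Zn m n) = {\<one>\<^bsub>PGm m\<^esub>} \<times> carrier (integer_mod_group n)"
proof (intro equalityI subsetI)
  fix x assume xD: "x \<in> Dm (Z2m_Zn m n)"
  then have x: "x \<in> carrier (Z2m_Zn m n)" and NN: "Nb (Z2m_Zn m n) x = carrier (Z2m_Zn m n)"
    by (auto simp: Dm_def)
  have fx: "fst x \<in> carrier (PGm m)" using x by (simp add: mem_H)
  have "fst x = \<one>\<^bsub>PGm m\<^esub>"
  proof (rule ccontr)
    assume x1: "fst x \<noteq> \<one>\<^bsub>PGm m\<^esub>"
    obtain g where g: "g \<in> carrier (PGm m)" "g \<noteq> \<one>\<^bsub>PGm m\<^esub>" "g \<noteq> fst x" using PG_other[OF m fx] by blast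
    have "(g, 0) \<in> carrier (Z2m_Zn m n)" using g by (simp add: mem_H)
    moreover have "(g, 0) \<notin> Nb (Z2m_Zn m n) x" using Nb_H[OF n x x1] g by auto
    ultimately show False using NN by simp
  qed
  then show "x \<in> {\<one>\<^bsub>PGm m\<^esub>} \<times> carrier (integer_mod_group n)" using x by (auto simp: mem_H mem_Times_iff)
next
  fix x assume x: "x \<in> {\<one>\<^bsub>PGm m\<^esub>} \<times> carrier (integer_mod_group n)"
  have o: "\<one>\<^bsub>PGm m\<^esub> \<in> carrier (PGm m)" using monoid.one_closed[OF group.is_monoid[OF group_PGm]] .
  have xH: "x \<in> carrier (Z2m_Zn m n)" using x o by (auto simp: mem_H mem_Times_iff)
  have "Nb (Z2m_Zn m n) x = carrier (Z2m_Zn m n)"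
  proof (intro equalityI subsetI)
    show "y \<in> carrier (Z2m_Zn m n)" if "y \<in> Nb (Z2m_Zn m n) x" for y using that by (simp add: Nb_def)
    fix y assume y: "y \<in> carrier (Z2m_Zn m n)"
    then have "cadj (Z2m_Zn m n) x y" using cadj_H[OF n xH y] x by auto
    then show "y \<in> Nb (Z2m_Zn m n) x" using y by (simp add: Nb_def)
  qed
  then show "x \<in> Dm (Z2m_Zn m n)" using xH by (simp add: Dm_def)
qed

lemma GP_H:
  assumes n: "0 < n" "odd n" and m: "2 \<le> m"
  shows "GP (Z2m_Zn m n) n"
proof -
  let ?H = "Z2m_Zn m n"
  let ?Z = "carrier (integer_mod_group n)"
  let ?o = "\<one>\<^bsub>PGm m\<^esub>"
  have o: "?o \<in> carrier (PGm m)" using monoid.one_closed[OF group.is_monoid[OF group_PGm]] .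
  have DmH: "Dm ?H = {?o} \<times> ?Z" by (rule Dm_H[OF n m])
  have cZ: "card ?Z = n" using n(1) by (rule card_Zn)
  have finZ: "finite ?Z" using n by (simp add: carrier_integer_mod_group)
  have notD: "x \<in> carrier ?H - Dm ?H \<Longrightarrow> x \<in> carrier ?H \<and> fst x \<noteq> ?o" for x
    using DmH by (auto simp: mem_Times_iff mem_H)
  have c1: "card (Dm ?H) = n" using DmH cZ by (simp add: card_cartesian_product)
  have c2: "\<forall>x\<in>carrier ?H - Dm ?H. card (Nb ?H x) = 2 * n \<and> (\<forall>a\<in>Nb ?H x. \<forall>b\<in>Nb ?H x. cadj ?H a b) \<and>
        (\<forall>y\<in>carrier ?H - Dm ?H. y \<in> Nb ?H x \<longrightarrow> Nb ?H y = Nb ?H x)"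
  proof
    fix x assume xx: "x \<in> carrier ?H - Dm ?H"
    then have x: "x \<in> carrier ?H" and x1: "fst x \<noteq> ?o" using notD by blast+
    have NbX: "Nb ?H x = {?o, fst x} \<times> ?Z" by (rule Nb_H[OF n x x1])
    have c2e: "card {?o, fst x} = 2" using x1 by (intro card_2_iff[THEN iffD2]) blast
    have A: "card (Nb ?H x) = 2 * n" unfolding NbX card_cartesian_product c2e cZ ..
    have B: "\<forall>a\<in>Nb ?H x. \<forall>b\<in>Nb ?H x. cadj ?H a b"
    proof (intro ballI)
      fix a b assume a: "a \<in> Nb ?H x" and b: "b \<in> Nb ?H x"
      have aH: "a \<in> carrier ?H" by (rule Nb_carrier[OF a])
      have bH: "b \<in> carrier ?H" by (rule Nb_carrier[OF b])
      have "fst a \<in> {?o, fst x}" using a unfolding NbX mem_Times_iff by (rule conjunct1)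
      then have fa: "fst a = ?o \<or> fst a = fst x" by blast
      have "fst b \<in> {?o, fst x}" using b unfolding NbX mem_Times_iff by (rule conjunct1)
      then have fb: "fst b = ?o \<or> fst b = fst x" by blast
      have "fst a = ?o \<or> fst b = ?o \<or> fst a = fst b" using fa fb by metis
      then show "cadj ?H a b" by (rule cadj_H[OF n aH bH, THEN iffD2])
    qed
    have C: "\<forall>y\<in>carrier ?H - Dm ?H. y \<in> Nb ?H x \<longrightarrow> Nb ?H y = Nb ?H x"
    proof (intro ballI impI)
      fix y assume yy: "y \<in> carrier ?H - Dm ?H" and yN: "y \<in> Nb ?H x"
      have y: "y \<in> carrier ?H" and y1: "fst y \<noteq> ?o" using notD[OF yy] by blast+
      have "fst y \<in> {?o, fst x}" using yN unfolding NbX mem_Times_iff by (rule conjunct1)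
      then have "fst y = fst x" using y1 by blast
      then show "Nb ?H y = Nb ?H x" unfolding Nb_H[OF n x x1] Nb_H[OF n y y1] by (rule arg_cong)
    qed
    show "card (Nb ?H x) = 2 * n \<and> (\<forall>a\<in>Nb ?H x. \<forall>b\<in>Nb ?H x. cadj ?H a b) \<and>
        (\<forall>y\<in>carrier ?H - Dm ?H. y \<in> Nb ?H x \<longrightarrow> Nb ?H y = Nb ?H x)" using A B C by blast
  qed
  have c3: "\<exists>x\<in>carrier ?H - Dm ?H. \<exists>y\<in>carrier ?H - Dm ?H. y \<notin> Nb ?H x \<and> Nb ?H x \<inter> Nb ?H y = Dm ?H"
  proof -
    obtain f where f: "f \<in> carrier (PGm m)" "f \<noteq> ?o" using PG_other[OF m o] by blast
    obtain g where g: "g \<in> carrier (PGm m)" "g \<noteq> ?o" "g \<noteq> f" using PG_other[OF m f(1)] by blast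
    have xH: "(f, 0) \<in> carrier ?H" and yH: "(g, 0) \<in> carrier ?H" using f g by (simp_all add: mem_H)
    have "(f, 0) \<notin> Dm ?H" "(g, 0) \<notin> Dm ?H" unfolding DmH mem_Times_iff fst_conv using f g by blast+
    then have xD: "(f, 0) \<in> carrier ?H - Dm ?H" and yD: "(g, 0) \<in> carrier ?H - Dm ?H"
      using xH yH by blast+
    have f1: "fst (f, 0::int) \<noteq> ?o" using f by simp
    have g1: "fst (g, 0::int) \<noteq> ?o" using g by simp
    have Nx: "Nb ?H (f, 0) = {?o, f} \<times> ?Z" using Nb_H[OF n xH f1] by simp
    have Ny: "Nb ?H (g, 0) = {?o, g} \<times> ?Z" using Nb_H[OF n yH g1] by simp
    have "(g, 0) \<notin> Nb ?H (f, 0)" unfolding Nx mem_Times_iff fst_conv using g by blast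
    moreover have "Nb ?H (f, 0) \<inter> Nb ?H (g, 0) = Dm ?H"
    proof -
      have "{?o, f} \<inter> {?o, g} = {?o}" using g by blast
      then show ?thesis unfolding Nx Ny DmH by (simp only: Times_Int_Times Int_absorb)
    qed
    ultimately show ?thesis using xD yD by blast
  qed
  show ?thesis unfolding GP_def using c1 c2 c3 by blast
qed

lemma GP_transport:
  assumes bij: "bij_betw f (carrier G) (carrier H)"
    and pres: "\<And>x y. x \<in> carrier G \<Longrightarrow> y \<in> carrier G \<Longrightarrow> cadj G x y \<longleftrightarrow> cadj H (f x) (f y)"
    and gp: "GP H n"
  shows "GP G n"
proof -
  have inj: "inj_on f (carrier G)" and img: "f ` carrier G = carrier H" using bij by (auto simp: bij_betw_def)
  have NbG: "Nb G x \<subseteq> carrier G" for x unfolding Nb_def by blast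
  have T1: "f ` Nb G x = Nb H (f x)" if x: "x \<in> carrier G" for x
  proof (intro equalityI subsetI)
    fix z assume "z \<in> f ` Nb G x"
    then obtain y where y: "y \<in> carrier G" "cadj G x y" "z = f y" unfolding Nb_def by blast
    then have "cadj H (f x) z" "z \<in> carrier H" using pres[OF x y(1)] img by auto
    then show "z \<in> Nb H (f x)" unfolding Nb_def by blast
  next
    fix z assume z: "z \<in> Nb H (f x)"
    then have zH: "z \<in> carrier H" and c: "cadj H (f x) z" unfolding Nb_def by blast+
    then obtain y where y: "y \<in> carrier G" "z = f y" using img by blast
    then have "cadj G x y" using pres[OF x y(1)] c by simp
    then have "y \<in> Nb G x" using y unfolding Nb_def by blast
    then show "z \<in> f ` Nb G x" using y by blast
  qed
  have T2: "x \<in> Dm G \<longleftrightarrow> f x \<in> Dm H" if x: "x \<in> carrier G" for x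
  proof -
    have "Nb G x = carrier G \<longleftrightarrow> f ` Nb G x = f ` carrier G"
      using inj_on_image_eq_iff[OF inj NbG[of x] order_refl] by simp
    then show ?thesis using T1[OF x] img x bij_betwE[OF bij] by (auto simp: Dm_def)
  qed
  have DmG: "Dm G \<subseteq> carrier G" unfolding Dm_def by blast
  have DmH: "Dm H \<subseteq> carrier H" unfolding Dm_def by blast
  have T4: "f ` Dm G = Dm H"
  proof (intro equalityI subsetI)
    fix z assume "z \<in> f ` Dm G"
    then show "z \<in> Dm H" using T2 DmG by auto
  next
    fix z assume z: "z \<in> Dm H"
    then obtain y where y: "y \<in> carrier G" "z = f y" using img DmH by blast
    then show "z \<in> f ` Dm G" using T2[OF y(1)] z by auto
  qed
  have out: "f x \<in> carrier H - Dm H" if "x \<in> carrier G - Dm G" for x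
    using that T2 bij_betwE[OF bij] by auto
  have c1: "card (Dm G) = n"
    using GP_card[OF gp] T4 card_image[OF inj_on_subset[OF inj DmG]] by simp
  have c2: "\<forall>x\<in>carrier G - Dm G. card (Nb G x) = 2 * n \<and> (\<forall>a\<in>Nb G x. \<forall>b\<in>Nb G x. cadj G a b) \<and>
        (\<forall>y\<in>carrier G - Dm G. y \<in> Nb G x \<longrightarrow> Nb G y = Nb G x)"
  proof
    fix x assume xx: "x \<in> carrier G - Dm G"
    have x: "x \<in> carrier G" using xx by simp
    have L: "card (Nb H (f x)) = 2 * n \<and> (\<forall>a\<in>Nb H (f x). \<forall>b\<in>Nb H (f x). cadj H a b) \<and>
        (\<forall>y\<in>carrier H - Dm H. y \<in> Nb H (f x) \<longrightarrow> Nb H y = Nb H (f x))" by (rule GP_loc[OF gp out[OF xx]])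
    have "card (f ` Nb G x) = card (Nb G x)" by (rule card_image[OF inj_on_subset[OF inj NbG]])
    then have A: "card (Nb G x) = 2 * n" using L T1[OF x] by simp
    have B: "\<forall>a\<in>Nb G x. \<forall>b\<in>Nb G x. cadj G a b"
    proof (intro ballI)
      fix a b assume a: "a \<in> Nb G x" and b: "b \<in> Nb G x"
      have aG: "a \<in> carrier G" and bG: "b \<in> carrier G" using a b NbG by auto
      have "f a \<in> Nb H (f x)" "f b \<in> Nb H (f x)" using a b T1[OF x] by auto
      then have "cadj H (f a) (f b)" using L by blast
      then show "cadj G a b" using pres[OF aG bG] by simp
    qed
    have C: "\<forall>y\<in>carrier G - Dm G. y \<in> Nb G x \<longrightarrow> Nb G y = Nb G x"
    proof (intro ballI impI)
      fix y assume yy: "y \<in> carrier G - Dm G" and yN: "y \<in> Nb G x"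
      have y: "y \<in> carrier G" using yy by auto
      have "f y \<in> Nb H (f x)" using yN T1[OF x] by auto
      then have "Nb H (f y) = Nb H (f x)" using L out[OF yy] by blast
      then have "f ` Nb G y = f ` Nb G x" using T1[OF x] T1[OF y] by simp
      then show "Nb G y = Nb G x" using inj_on_image_eq_iff[OF inj NbG NbG] by simp
    qed
    show "card (Nb G x) = 2 * n \<and> (\<forall>a\<in>Nb G x. \<forall>b\<in>Nb G x. cadj G a b) \<and>
        (\<forall>y\<in>carrier G - Dm G. y \<in> Nb G x \<longrightarrow> Nb G y = Nb G x)" using A B C by blast
  qed
  have c3: "\<exists>x\<in>carrier G - Dm G. \<exists>y\<in>carrier G - Dm G. y \<notin> Nb G x \<and> Nb G x \<inter> Nb G y = Dm G"
  proof -
    obtain x' y' where x': "x' \<in> carrier H - Dm H" and y': "y' \<in> carrier H - Dm H"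
      and ny: "y' \<notin> Nb H x'" and I: "Nb H x' \<inter> Nb H y' = Dm H" using GP_ex[OF gp] by blast
    obtain x where x: "x \<in> carrier G" "x' = f x" using x' img by blast
    obtain y where y: "y \<in> carrier G" "y' = f y" using y' img by blast
    have xD: "x \<in> carrier G - Dm G" using x x' T2[OF x(1)] by auto
    have yD: "y \<in> carrier G - Dm G" using y y' T2[OF y(1)] by auto
    have "y \<notin> Nb G x"
    proof
      assume "y \<in> Nb G x"
      then have "f y \<in> Nb H (f x)" using T1[OF x(1)] by auto
      then show False using ny x y by simp
    qed
    moreover have "Nb G x \<inter> Nb G y = Dm G"
    proof -
      have "f ` (Nb G x \<inter> Nb G y) = f ` Nb G x \<inter> f ` Nb G y"
        by (rule inj_on_image_Int[OF inj NbG NbG])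
      also have "\<dots> = Dm H" using T1[OF x(1)] T1[OF y(1)] I x y by simp
      also have "\<dots> = f ` Dm G" using T4 by simp
      finally have "f ` (Nb G x \<inter> Nb G y) = f ` Dm G" .
      moreover have "Nb G x \<inter> Nb G y \<subseteq> carrier G" using NbG by auto
      ultimately show ?thesis using inj_on_image_eq_iff[OF inj _ DmG] by blast
    qed
    ultimately show ?thesis using xD yD by blast
  qed
  show ?thesis unfolding GP_def using c1 c2 c3 by blast
qed

theorem theorem6:
  fixes G :: "('a, 'b) monoid_scheme" and m n :: nat
  assumes "group G" and "finite (carrier G)" and "0 < m" and "0 < n" and "odd n"
  shows "ep_graph_iso G (Z2m_Zn m n) \<longleftrightarrow> G \<cong> Z2m_Zn m n"
proof
  let ?H = "Z2m_Zn m n"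
  have gG: "group G" by (rule assms(1))
  have gH: "group ?H" by (rule group_H)
  have nn: "0 < n" "odd n" using assms by auto
  assume "ep_graph_iso G ?H"
  then obtain f where bij: "bij_betw f (carrier G) (carrier ?H)"
    and adj: "\<forall>x\<in>carrier G. \<forall>y\<in>carrier G. ep_adj G x y \<longleftrightarrow> ep_adj ?H (f x) (f y)"
    unfolding ep_graph_iso_def by blast
  have pres: "cadj G x y \<longleftrightarrow> cadj ?H (f x) (f y)" if x: "x \<in> carrier G" and y: "y \<in> carrier G" for x y
  proof -
    have fx: "f x \<in> carrier ?H" "f y \<in> carrier ?H" using bij x y bij_betwE by blast+
    show ?thesis
    proof (cases "x = y")
      case True then show ?thesis using group.cadj_refl[OF gG x] group.cadj_refl[OF gH fx(1)] by simp
    next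
      case False
      then have "f x \<noteq> f y" using bij x y by (auto simp: bij_betw_def inj_on_def)
      moreover have "ep_adj G x y \<longleftrightarrow> ep_adj ?H (f x) (f y)" using adj x y by blast
      ultimately show ?thesis using False group.ep_adj_iff[OF gG x y] group.ep_adj_iff[OF gH fx] by simp
    qed
  qed
  have cardH: "card (carrier ?H) = 2 ^ m * n" using nn(1) by (rule card_H)
  have cardG: "card (carrier G) = 2 ^ m * n" using bij_betw_same_card[OF bij] cardH by simp
  show "G \<cong> ?H"
  proof (cases "m = 1")
    case True
    have allH: "\<And>a b. a \<in> carrier ?H \<Longrightarrow> b \<in> carrier ?H \<Longrightarrow> cadj ?H a b"
      using all_cadj_H1[OF nn] True by blast
    have allG: "\<And>a b. a \<in> carrier G \<Longrightarrow> b \<in> carrier G \<Longrightarrow> cadj G a b"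
    proof -
      fix a b assume a: "a \<in> carrier G" and b: "b \<in> carrier G"
      have "f a \<in> carrier ?H" "f b \<in> carrier ?H" using bij a b bij_betwE by blast+
      then show "cadj G a b" using pres[OF a b] allH by simp
    qed
    obtain g where g: "g \<in> carrier G" "carrier G = cyc G g"
      using group.all_cadj_cyclic[OF gG assms(2) allG] by blast
    obtain h where h: "h \<in> carrier ?H" "carrier ?H = cyc ?H h"
      using group.all_cadj_cyclic[OF gH finite_H[OF nn(1)] allH] by blast
    have ZG: "integer_mod_group (2 ^ m * n) \<cong> G" by (rule cyclic_iso_Zn[OF gG assms(2) g cardG])
    have ZH: "integer_mod_group (2 ^ m * n) \<cong> ?H" by (rule cyclic_iso_Zn[OF gH finite_H[OF nn(1)] h cardH])
    have "G \<cong> integer_mod_group (2 ^ m * n)" using group.iso_sym[OF gG] ZG group.iso_sym[OF group_integer_mod_group] by blast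
    then show ?thesis using ZH iso_trans by blast
  next
    case False
    then have m2: "2 \<le> m" using assms(3) by simp
    have "GP G n" by (rule GP_transport[OF bij pres GP_H[OF nn m2]])
    then show ?thesis using group.GP_structure[OF gG assms(2) _ nn(2) cardG] by blast
  qed
next
  assume "G \<cong> Z2m_Zn m n"
  then obtain h where "h \<in> iso G (Z2m_Zn m n)" by (auto simp: is_iso_def)
  then show "ep_graph_iso G (Z2m_Zn m n)" by (rule iso_ep_graph_iso[OF assms(1) group_H])
qed


end
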